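(* Let $\lambda=\lambda^x\otimes\mu\in\Pi(\mu,\nu,\gamma)$ with $\lambda^x\in\Pi(\nu^x,\gamma^x)$ for $\mu$-a.e. $x$, where $\pi_{XY}\#\lambda=\nu^x\otimes\mu$ and $\pi_{XZ}\#\lambda=\gamma^x\otimes\mu$. If $\lambda^x$ is an extreme point of $\Pi(\nu^x,\gamma^x)$ for $\mu$-a.e. $x\in X$, then $\lambda$ is an extreme point of $\Pi(\lambda^{XY},\gamma)\cap\Pi(\lambda^{XZ},\nu)$.
   Context: $X,Y,Z$ are complete separable metric spaces with Borel probability measures $\mu,\nu,\gamma$; $\Pi(\mu,\nu,\gamma)$ is the set of Borel probability measures on $X\times Y\times Z$ with those marginals, and $\Pi(\sigma,\eta)$ the set of probability measures on a product with marginals $\sigma,\eta$. $\pi_{XY},\pi_{XZ}$ are projections; $\lambda^{XY}=\pi_{XY}\#\lambda$, $\lambda^{XZ}=\pi_{XZ}\#\lambda$. $\Pi(\lambda^{XY},\gamma)=\{\rho\in\Pi(\mu,\nu,\gamma):\pi_{XY}\#\rho=\lambda^{XY}\}$ and $\Pi(\lambda^{XZ},\nu)=\{\rho\in\Pi(\mu,\nu,\gamma):\pi_{XZ}\#\rho=\lambda^{XZ}\}$. For a measure $\sigma$ on $A$ and a measurable family $(\eta^a)$ of probability measures on $B$, $\eta^a\otimes\sigma$ is the measure with $(\eta^a\otimes\sigma)(E\times F)=\int_E\eta^a(F)d\sigma(a)$ (disintegration, unique up to $\sigma$-null sets). *)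

theory Defs
  imports "HOL-Probability.Probability"
begin

definition borel_prob :: "'a::topological_space measure \<Rightarrow> bool" where
  "borel_prob M \<longleftrightarrow> prob_space M \<and> sets M = sets borel"

definition couplings ::
  "'a::topological_space measure \<Rightarrow> 'b::topological_space measure \<Rightarrow> ('a \<times> 'b) measure set" where
  "couplings \<sigma> \<eta> = {\<rho>. borel_prob \<rho> \<and> distr \<rho> borel fst = \<sigma> \<and> distr \<rho> borel snd = \<eta>}"

definition piXY :: "'a \<times> 'b \<times> 'c \<Rightarrow> 'a \<times> 'b" where
  "piXY = (\<lambda>(x, y, z). (x, y))"

definition piXZ :: "'a \<times> 'b \<times> 'c \<Rightarrow> 'a \<times> 'c" where
  "piXZ = (\<lambda>(x, y, z). (x, z))"

definition couplings3 ::
  "'a::topological_space measure \<Rightarrow> 'b::topological_space measure \<Rightarrow> 'c::topological_space measure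
    \<Rightarrow> ('a \<times> 'b \<times> 'c) measure set" where
  "couplings3 \<mu> \<nu> \<gamma> = {\<rho>. borel_prob \<rho> \<and> distr \<rho> borel fst = \<mu>
      \<and> distr \<rho> borel (\<lambda>(x, y, z). y) = \<nu> \<and> distr \<rho> borel (\<lambda>(x, y, z). z) = \<gamma>}"

text \<open>Pi(lambda^XY, gamma) and Pi(lambda^XZ, nu), as subsets of Pi(mu, nu, gamma).\<close>
definition couplings_XY ::
  "'a::topological_space measure \<Rightarrow> 'b::topological_space measure \<Rightarrow> 'c::topological_space measure
    \<Rightarrow> ('a \<times> 'b) measure \<Rightarrow> ('a \<times> 'b \<times> 'c) measure set" where
  "couplings_XY \<mu> \<nu> \<gamma> \<sigma> = {\<rho> \<in> couplings3 \<mu> \<nu> \<gamma>. distr \<rho> borel piXY = \<sigma>}"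

definition couplings_XZ ::
  "'a::topological_space measure \<Rightarrow> 'b::topological_space measure \<Rightarrow> 'c::topological_space measure
    \<Rightarrow> ('a \<times> 'c) measure \<Rightarrow> ('a \<times> 'b \<times> 'c) measure set" where
  "couplings_XZ \<mu> \<nu> \<gamma> \<sigma> = {\<rho> \<in> couplings3 \<mu> \<nu> \<gamma>. distr \<rho> borel piXZ = \<sigma>}"

definition is_convex_comb :: "real \<Rightarrow> 'a::topological_space measure \<Rightarrow> 'a measure \<Rightarrow> 'a measure \<Rightarrow> bool" where
  "is_convex_comb t \<rho>1 \<rho>2 \<rho> \<longleftrightarrow>
     (\<forall>A \<in> sets borel. emeasure \<rho> A = ennreal t * emeasure \<rho>1 A + ennreal (1 - t) * emeasure \<rho>2 A)"

definition extreme_point :: "'a::topological_space measure set \<Rightarrow> 'a measure \<Rightarrow> bool" where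
  "extreme_point C \<rho> \<longleftrightarrow> \<rho> \<in> C \<and>
     (\<forall>\<rho>1 \<in> C. \<forall>\<rho>2 \<in> C. \<forall>t::real. 0 < t \<and> t < 1 \<and> is_convex_comb t \<rho>1 \<rho>2 \<rho> \<longrightarrow> \<rho>1 = \<rho>2)"

text \<open>rho = K^a \<otimes> sigma: (K a) is a measurable family of Borel probability measures on B
  (kernel) and rho(E x F) = integral over E of K^a(F) d sigma(a).\<close>
definition disintegration ::
  "('a::topological_space \<Rightarrow> 'b::topological_space measure) \<Rightarrow> 'a measure \<Rightarrow> ('a \<times> 'b) measure \<Rightarrow> bool" where
  "disintegration K \<sigma> \<rho> \<longleftrightarrow> K \<in> measurable \<sigma> (prob_algebra borel) \<and>
     (\<forall>E \<in> sets borel. \<forall>F \<in> sets borel. emeasure \<rho> (E \<times> F) = (\<integral>\<^sup>+ a \<in> E. emeasure (K a) F \<partial>\<sigma>))"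

end

theory Submission
  imports Defs
begin


lemma countable_gen:
  "\<exists>E::'a::second_countable_topology set set. countable E \<and> Int_stable E \<and> UNIV \<in> E \<and>
     E \<subseteq> sets borel \<and> sets borel = sigma_sets UNIV E"
proof -
  obtain B :: "'a set set" where B: "countable B" "topological_basis B"
    using ex_countable_basis by blast
  define E where "E = Inter ` {F. finite F \<and> F \<subseteq> B}"
  have "countable E" unfolding E_def using B by (intro countable_image countable_Collect_finite_subset)
  moreover have "Int_stable E"
    unfolding E_def Int_stable_def
  proof safe
    fix F G assume "finite F" "F \<subseteq> B" "finite G" "G \<subseteq> B"
    then show "\<Inter>F \<inter> \<Inter>G \<in> Inter ` {F. finite F \<and> F \<subseteq> B}"
      by (intro image_eqI[of _ _ "F \<union> G"]) auto
  qed
  moreover have "UNIV \<in> E" unfolding E_def by (intro image_eqI[of _ _ "{}"]) auto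
  moreover have op: "open e" if "e \<in> E" for e
    using that B(2) unfolding E_def by (auto intro!: open_Inter dest: topological_basis_open)
  then have "E \<subseteq> sets borel" by auto
  moreover have "sets borel = sigma_sets UNIV E"
  proof
    have "B \<subseteq> E" unfolding E_def by (auto intro!: image_eqI[where x="{b}" for b])
    then show "sets borel \<subseteq> sigma_sets UNIV E"
      unfolding borel_eq_countable_basis[OF B] by (simp add: sigma_sets_mono')
    show "sigma_sets UNIV E \<subseteq> sets borel"
      using \<open>E \<subseteq> sets borel\<close> by (metis sets.sigma_sets_subset space_borel)
  qed
  ultimately show ?thesis by blast
qed

lemma ae_eq_sets:
  assumes "sigma_finite_measure M" and h: "h \<in> borel_measurable M" and k: "k \<in> borel_measurable M"
    and eq: "\<And>A. A \<in> sets M \<Longrightarrow> (\<integral>\<^sup>+x. h x * indicator A x \<partial>M) = (\<integral>\<^sup>+x. k x * indicator A x \<partial>M)"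
  shows "AE x in M. h x = k x"
proof (rule sigma_finite_measure.density_unique[OF assms(1) h k])
  show "density M h = density M k"
    by (rule measure_eqI) (auto simp: emeasure_density h k eq)
qed

lemma fin_eq_gen:
  fixes M N :: "'a::topological_space measure"
  assumes "Int_stable E" "UNIV \<in> E" "sets borel = sigma_sets UNIV E"
    and "sets M = sets borel" "sets N = sets borel"
    and "\<And>X. X \<in> E \<Longrightarrow> emeasure M X = emeasure N X"
    and "emeasure M UNIV \<noteq> \<infinity>"
  shows "M = N"
  by (rule measure_eqI_generator_eq[where E=E and \<Omega>=UNIV and A="\<lambda>_. UNIV"]) (use assms in auto)




lemma rect_borel:
  "a \<in> sets borel \<Longrightarrow> b \<in> sets borel \<Longrightarrow>
   a \<times> b \<in> sets (borel :: ('a::second_countable_topology \<times> 'b::second_countable_topology) measure)"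
  using pair_measureI[of a borel b borel] by (metis borel_prod)

context
  fixes \<mu> :: "'x::second_countable_topology measure" and lam :: "('x \<times> 'w::second_countable_topology) measure"
    and L :: "'x \<Rightarrow> 'w measure"
  assumes mu: "borel_prob \<mu>" and lamP: "borel_prob lam" and LD: "disintegration L \<mu> lam"
begin

lemma sets_mu[measurable_cong]: "sets \<mu> = sets borel" using mu by (simp add: borel_prob_def)
lemma space_mu[simp]: "space \<mu> = UNIV" using sets_eq_imp_space_eq[OF sets_mu] by simp
lemma sets_lam[measurable_cong]: "sets lam = sets borel" using lamP by (simp add: borel_prob_def)
lemma space_lam[simp]: "space lam = UNIV" using sets_eq_imp_space_eq[OF sets_lam] by simp
lemma prob_mu: "prob_space \<mu>" using mu by (simp add: borel_prob_def)
lemma prob_lam: "prob_space lam" using lamP by (simp add: borel_prob_def)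

lemma L_prob: "L \<in> \<mu> \<rightarrow>\<^sub>M prob_algebra borel" using LD by (simp add: disintegration_def)
lemma L_sub[measurable]: "L \<in> \<mu> \<rightarrow>\<^sub>M subprob_algebra borel"
  using measurable_prob_algebraD[OF L_prob] .
lemma sets_L[measurable_cong]: "sets (L x) = sets borel"
  using subprob_measurableD(2)[OF L_sub, of x] by simp
lemma space_L[simp]: "space (L x) = UNIV" using sets_eq_imp_space_eq[OF sets_L] by simp
lemma prob_L: "prob_space (L x)"
  using measurable_space[OF L_prob, of x] by (simp add: space_prob_algebra)
lemma rect: "E \<in> sets borel \<Longrightarrow> F \<in> sets borel \<Longrightarrow>
   emeasure lam (E \<times> F) = (\<integral>\<^sup>+ a. emeasure (L a) F * indicator E a \<partial>\<mu>)"
  using LD by (simp add: disintegration_def)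

lemma sets_muW: "sets (\<mu> \<Otimes>\<^sub>M (borel :: 'w measure)) = sets (borel :: ('x \<times> 'w) measure)"
  by (subst sets_pair_measure_cong[OF sets_mu refl]) (subst borel_prod, rule refl)

lemma Pair_borel: "Pair x \<in> (borel::'w measure) \<rightarrow>\<^sub>M (borel :: ('x \<times> 'w) measure)"
  by (rule borel_measurable_continuous_onI) (intro continuous_intros)

lemma Pair_L: "Pair x \<in> L x \<rightarrow>\<^sub>M (borel :: ('x \<times> 'w) measure)"
  unfolding measurable_cong_sets[OF sets_L refl] by (rule Pair_borel)

lemma meas_curry:
  assumes "g \<in> borel_measurable (borel :: ('x \<times> 'w) measure)"
  shows "(\<lambda>(x, w). g (x, w)) \<in> borel_measurable (\<mu> \<Otimes>\<^sub>M borel)"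
  unfolding measurable_cong_sets[OF sets_muW refl] using assms by (simp add: case_prod_beta')

lemma meas_inner:
  assumes "g \<in> borel_measurable (borel :: ('x \<times> 'w) measure)"
  shows "(\<lambda>x. \<integral>\<^sup>+w. g (x, w) \<partial>L x) \<in> borel_measurable \<mu>"
  by (rule nn_integral_measurable_subprob_algebra2[OF meas_curry[OF assms] L_sub])

lemma meas_sect:
  assumes "g \<in> borel_measurable (borel :: ('x \<times> 'w) measure)"
  shows "(\<lambda>w. g (x, w)) \<in> borel_measurable (L x)"
  using measurable_compose[OF Pair_L assms] by simp

definition "K x = distr (L x) borel (Pair x)"

lemma K_meas: "K \<in> \<mu> \<rightarrow>\<^sub>M subprob_algebra borel"
  unfolding K_def
proof (rule measurable_distr2[OF _ L_sub])
  show "(\<lambda>(x, w). (x, w)) \<in> \<mu> \<Otimes>\<^sub>M borel \<rightarrow>\<^sub>M (borel :: ('x \<times> 'w) measure)"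
    unfolding measurable_cong_sets[OF sets_muW refl] by (simp add: case_prod_beta')
qed

lemma lam_bind: "lam = \<mu> \<bind> K"
proof (rule measure_eqI_generator_eq[where E="{a \<times> b | a b. a \<in> sets borel \<and> b \<in> sets borel}"
      and \<Omega>=UNIV and A="\<lambda>_. UNIV"])
  show "Int_stable {a \<times> b | a b. a \<in> sets (borel::'x measure) \<and> b \<in> sets (borel::'w measure)}"
    using Int_stable_pair_measure_generator[of "borel::'x measure" "borel::'w measure"] by simp
  show "{a \<times> b | a b. a \<in> sets (borel::'x measure) \<and> b \<in> sets (borel::'w measure)} \<subseteq> Pow UNIV" by auto
  have sp: "sets (borel::('x\<times>'w) measure) = sigma_sets UNIV {a \<times> b | a b. a \<in> sets (borel::'x measure) \<and> b \<in> sets (borel::'w measure)}"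
  proof -
    have "sets ((borel::'x measure) \<Otimes>\<^sub>M (borel::'w measure)) = sigma_sets UNIV {a \<times> b | a b. a \<in> sets (borel::'x measure) \<and> b \<in> sets (borel::'w measure)}"
      using sets_pair_measure[of "borel::'x measure" "borel::'w measure"] by simp
    then show ?thesis by (metis borel_prod)
  qed
  show "sets lam = sigma_sets UNIV {a \<times> b | a b. a \<in> sets (borel::'x measure) \<and> b \<in> sets (borel::'w measure)}"
    using sp sets_lam by simp
  have sb: "sets (\<mu> \<bind> K) = sets borel"
    by (rule sets_bind[OF sets_kernel[OF K_meas]]) auto
  show "sets (\<mu> \<bind> K) = sigma_sets UNIV {a \<times> b | a b. a \<in> sets (borel::'x measure) \<and> b \<in> sets (borel::'w measure)}"
    using sp sb by simp
  show "range (\<lambda>_. UNIV) \<subseteq> {a \<times> b | a b. a \<in> sets (borel::'x measure) \<and> b \<in> sets (borel::'w measure)}"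
    by (auto intro!: exI[of _ UNIV])
  show "(\<Union>i. UNIV) = UNIV" by simp
  show "emeasure lam UNIV \<noteq> \<infinity>" for i::nat
    using prob_space.emeasure_space_1[OF prob_lam] by simp
  fix X assume "X \<in> {a \<times> b | a b. a \<in> sets (borel::'x measure) \<and> b \<in> sets (borel::'w measure)}"
  then obtain a b where X: "X = a \<times> b" "a \<in> sets borel" "b \<in> sets borel" by auto
  have "emeasure (\<mu> \<bind> K) X = (\<integral>\<^sup>+x. emeasure (K x) X \<partial>\<mu>)"
    by (rule emeasure_bind[OF _ K_meas]) (use X in \<open>auto intro: rect_borel\<close>)
  also have "\<dots> = (\<integral>\<^sup>+x. emeasure (L x) b * indicator a x \<partial>\<mu>)"
  proof (rule nn_integral_cong)
    fix x
    note m = Pair_L[of x]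
    have "emeasure (K x) X = emeasure (L x) (Pair x -` X)"
      unfolding K_def using X by (subst emeasure_distr[OF m]) (auto intro: rect_borel)
    then show "emeasure (K x) X = emeasure (L x) b * indicator a x"
      using X by (auto simp: indicator_def)
  qed
  also have "\<dots> = emeasure lam X" using rect X by simp
  finally show "emeasure lam X = emeasure (\<mu> \<bind> K) X" ..
qed

lemma disint_int:
  assumes g: "g \<in> borel_measurable (borel :: ('x \<times> 'w) measure)"
  shows "(\<integral>\<^sup>+p. g p \<partial>lam) = (\<integral>\<^sup>+x. \<integral>\<^sup>+w. g (x, w) \<partial>L x \<partial>\<mu>)"
proof -
  have "(\<integral>\<^sup>+p. g p \<partial>lam) = (\<integral>\<^sup>+x. \<integral>\<^sup>+p. g p \<partial>K x \<partial>\<mu>)"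
    by (subst lam_bind, rule nn_integral_bind[OF g K_meas])
  also have "\<dots> = (\<integral>\<^sup>+x. \<integral>\<^sup>+w. g (x, w) \<partial>L x \<partial>\<mu>)"
  proof (rule nn_integral_cong)
    fix x
    note m = Pair_L[of x]
    have g': "g \<in> borel_measurable (distr (L x) borel (Pair x))"
      unfolding measurable_cong_sets[OF sets_distr refl] by (rule g)
    show "(\<integral>\<^sup>+p. g p \<partial>K x) = (\<integral>\<^sup>+w. g (x, w) \<partial>L x)"
      unfolding K_def by (subst nn_integral_distr[OF m g']) simp
  qed
  finally show ?thesis .
qed

lemma sf_lam: "sigma_finite_measure lam"
  using prob_lam by (simp add: prob_space_imp_sigma_finite)
lemma sf_mu: "sigma_finite_measure \<mu>"
  using prob_mu by (simp add: prob_space_imp_sigma_finite)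

lemma meas_kern_L: "A \<in> sets borel \<Longrightarrow> (\<lambda>x. emeasure (L x) A) \<in> borel_measurable \<mu>"
  using measurable_compose[OF L_sub measurable_emeasure_subprob_algebra] by simp

context
  fixes \<rho> :: "('x \<times> 'w) measure"
  assumes rhoP: "borel_prob \<rho>" and ac: "absolutely_continuous lam \<rho>"
begin

lemma rho_dens: "\<rho> = density lam (RN_deriv lam \<rho>)"
  using sigma_finite_measure.density_RN_deriv[OF sf_lam ac] rhoP sets_lam
  by (simp add: borel_prob_def)

lemma f_meas[measurable]: "RN_deriv lam \<rho> \<in> borel_measurable (borel :: ('x \<times> 'w) measure)"
  using borel_measurable_RN_deriv[of lam \<rho>] measurable_cong_sets[OF sets_lam refl] by simp

lemma sets_R: "sets (density (L x) (\<lambda>w. RN_deriv lam \<rho> (x, w))) = sets borel"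
  by (simp add: sets_L)

lemma emeasure_R: "S \<in> sets borel \<Longrightarrow> emeasure (density (L x) (\<lambda>w. RN_deriv lam \<rho> (x, w))) S
   = (\<integral>\<^sup>+w. RN_deriv lam \<rho> (x, w) * indicator S w \<partial>L x)"
  by (rule emeasure_density[OF meas_sect[OF f_meas]]) (simp add: sets_L)

lemma comp_int:
  assumes S: "S \<in> sets (borel :: ('x \<times> 'w) measure)"
  shows "emeasure \<rho> S = (\<integral>\<^sup>+x. \<integral>\<^sup>+w. indicator S (x, w) \<partial>density (L x) (\<lambda>w. RN_deriv lam \<rho> (x, w)) \<partial>\<mu>)"
proof -
  have "emeasure \<rho> S = (\<integral>\<^sup>+p. RN_deriv lam \<rho> p * indicator S p \<partial>lam)"
    by (subst rho_dens, rule emeasure_density) (use S sets_lam in auto)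
  also have "\<dots> = (\<integral>\<^sup>+x. \<integral>\<^sup>+w. RN_deriv lam \<rho> (x, w) * indicator S (x, w) \<partial>L x \<partial>\<mu>)"
    by (rule disint_int) (use S in measurable)
  also have "\<dots> = (\<integral>\<^sup>+x. \<integral>\<^sup>+w. indicator S (x, w) \<partial>density (L x) (\<lambda>w. RN_deriv lam \<rho> (x, w)) \<partial>\<mu>)"
  proof (rule nn_integral_cong)
    fix x
    have "(\<lambda>w. indicator S (x, w) :: ennreal) \<in> borel_measurable (L x)"
      by (rule meas_sect) (use S in measurable)
    then show "(\<integral>\<^sup>+w. RN_deriv lam \<rho> (x, w) * indicator S (x, w) \<partial>L x) =
        (\<integral>\<^sup>+w. indicator S (x, w) \<partial>density (L x) (\<lambda>w. RN_deriv lam \<rho> (x, w)))"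
      by (subst nn_integral_density[OF meas_sect[OF f_meas]]) auto
  qed
  finally show ?thesis .
qed

lemma comp_rect:
  assumes E: "E \<in> sets borel" and S: "S \<in> sets borel"
  shows "emeasure \<rho> (E \<times> S) = (\<integral>\<^sup>+x. emeasure (density (L x) (\<lambda>w. RN_deriv lam \<rho> (x, w))) S * indicator E x \<partial>\<mu>)"
proof -
  have "emeasure \<rho> (E \<times> S) = (\<integral>\<^sup>+x. \<integral>\<^sup>+w. indicator (E \<times> S) (x, w) \<partial>density (L x) (\<lambda>w. RN_deriv lam \<rho> (x, w)) \<partial>\<mu>)"
    by (rule comp_int) (use E S in \<open>auto intro: rect_borel\<close>)
  also have "\<dots> = (\<integral>\<^sup>+x. emeasure (density (L x) (\<lambda>w. RN_deriv lam \<rho> (x, w))) S * indicator E x \<partial>\<mu>)"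
  proof (rule nn_integral_cong)
    fix x
    have "(\<integral>\<^sup>+w. indicator (E \<times> S) (x, w) \<partial>density (L x) (\<lambda>w. RN_deriv lam \<rho> (x, w)))
        = (\<integral>\<^sup>+w. indicator E x * indicator S w \<partial>density (L x) (\<lambda>w. RN_deriv lam \<rho> (x, w)))"
      by (rule nn_integral_cong) (simp add: indicator_def)
    also have "\<dots> = indicator E x * emeasure (density (L x) (\<lambda>w. RN_deriv lam \<rho> (x, w))) S"
      using S by (subst nn_integral_cmult) (auto simp: sets_L)
    finally show "(\<integral>\<^sup>+w. indicator (E \<times> S) (x, w) \<partial>density (L x) (\<lambda>w. RN_deriv lam \<rho> (x, w)))
        = emeasure (density (L x) (\<lambda>w. RN_deriv lam \<rho> (x, w))) S * indicator E x"
      by (simp add: mult.commute)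
  qed
  finally show ?thesis .
qed

lemma meas_R: "S \<in> sets borel \<Longrightarrow>
  (\<lambda>x. emeasure (density (L x) (\<lambda>w. RN_deriv lam \<rho> (x, w))) S) \<in> borel_measurable \<mu>"
  apply (subst emeasure_R, assumption)
  apply (rule meas_inner[where g="\<lambda>p. RN_deriv lam \<rho> p * indicator S (snd p)", simplified])
  apply (rule borel_measurable_times_ennreal[OF f_meas])
  apply (rule measurable_compose[OF _ borel_measurable_indicator, where f=snd])
  by (rule borel_measurable_continuous_onI) (intro continuous_intros)

lemma comp_ae:
  assumes S: "S \<in> sets borel"
    and eq: "\<And>E. E \<in> sets borel \<Longrightarrow> emeasure \<rho> (E \<times> S) = emeasure lam (E \<times> S)"
  shows "AE x in \<mu>. emeasure (density (L x) (\<lambda>w. RN_deriv lam \<rho> (x, w))) S = emeasure (L x) S"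
proof (rule ae_eq_sets[OF sf_mu meas_R[OF S] meas_kern_L[OF S]])
  fix A assume "A \<in> sets \<mu>"
  then have A: "A \<in> sets borel" by (simp add: sets_mu)
  show "(\<integral>\<^sup>+x. emeasure (density (L x) (\<lambda>w. RN_deriv lam \<rho> (x, w))) S * indicator A x \<partial>\<mu>) =
        (\<integral>\<^sup>+x. emeasure (L x) S * indicator A x \<partial>\<mu>)"
    using comp_rect[OF A S] eq[OF A] rect[OF A S] by simp
qed

end

end



lemma fst_borel: "fst \<in> (borel :: ('a::topological_space \<times> 'b::topological_space) measure) \<rightarrow>\<^sub>M borel"
  by (rule borel_measurable_continuous_onI) (intro continuous_intros)
lemma snd_borel: "snd \<in> (borel :: ('a::topological_space \<times> 'b::topological_space) measure) \<rightarrow>\<^sub>M borel"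
  by (rule borel_measurable_continuous_onI) (intro continuous_intros)

lemma dens_convex:
  fixes Lx :: "'a measure"
  assumes f1: "f1 \<in> borel_measurable Lx" and f2: "f2 \<in> borel_measurable Lx" and A: "A \<in> sets Lx"
  shows "emeasure (density Lx (\<lambda>w. ennreal t * f1 w + ennreal (1 - t) * f2 w)) A =
     ennreal t * emeasure (density Lx f1) A + ennreal (1 - t) * emeasure (density Lx f2) A"
proof -
  have "emeasure (density Lx (\<lambda>w. ennreal t * f1 w + ennreal (1 - t) * f2 w)) A =
     (\<integral>\<^sup>+w. (ennreal t * f1 w + ennreal (1 - t) * f2 w) * indicator A w \<partial>Lx)"
    by (rule emeasure_density) (use f1 f2 A in auto)
  also have "\<dots> = (\<integral>\<^sup>+w. ennreal t * (f1 w * indicator A w) + ennreal (1 - t) * (f2 w * indicator A w) \<partial>Lx)"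
    by (rule nn_integral_cong) (simp add: distrib_right mult.assoc)
  also have "\<dots> = ennreal t * (\<integral>\<^sup>+w. f1 w * indicator A w \<partial>Lx) + ennreal (1 - t) * (\<integral>\<^sup>+w. f2 w * indicator A w \<partial>Lx)"
    using f1 f2 A by (simp add: nn_integral_add nn_integral_cmult)
  also have "\<dots> = ennreal t * emeasure (density Lx f1) A + ennreal (1 - t) * emeasure (density Lx f2) A"
    using f1 f2 A by (simp add: emeasure_density)
  finally show ?thesis .
qed

lemma pointwise:
  fixes Lx :: "('y::second_countable_topology \<times> 'z::second_countable_topology) measure"
  assumes Lc: "Lx \<in> couplings Nx Gx" and ext: "extreme_point (couplings Nx Gx) Lx"
    and f1: "f1 \<in> borel_measurable (borel :: ('y \<times> 'z) measure)"
    and f2: "f2 \<in> borel_measurable (borel :: ('y \<times> 'z) measure)"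
    and EY: "Int_stable EY" "UNIV \<in> EY" "sets (borel :: 'y measure) = sigma_sets UNIV EY" "EY \<subseteq> sets borel"
    and EZ: "Int_stable EZ" "UNIV \<in> EZ" "sets (borel :: 'z measure) = sigma_sets UNIV EZ" "EZ \<subseteq> sets borel"
    and EW: "Int_stable EW" "UNIV \<in> EW" "sets (borel :: ('y \<times> 'z) measure) = sigma_sets UNIV EW" "EW \<subseteq> sets borel"
    and mY: "\<And>F. F \<in> EY \<Longrightarrow> emeasure (density Lx f1) (F \<times> UNIV) = emeasure Lx (F \<times> UNIV)
                 \<and> emeasure (density Lx f2) (F \<times> UNIV) = emeasure Lx (F \<times> UNIV)"
    and mZ: "\<And>F. F \<in> EZ \<Longrightarrow> emeasure (density Lx f1) (UNIV \<times> F) = emeasure Lx (UNIV \<times> F)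
                 \<and> emeasure (density Lx f2) (UNIV \<times> F) = emeasure Lx (UNIV \<times> F)"
    and cW: "\<And>S. S \<in> EW \<Longrightarrow> emeasure Lx S =
          ennreal t * emeasure (density Lx f1) S + ennreal (1 - t) * emeasure (density Lx f2) S"
    and t: "0 < t" "t < 1"
  shows "density Lx f1 = density Lx f2"
proof -
  have Lb: "borel_prob Lx" and LN: "distr Lx borel fst = Nx" and LG: "distr Lx borel snd = Gx"
    using Lc by (auto simp: couplings_def)
  have sL[measurable_cong]: "sets Lx = sets borel" and pL: "prob_space Lx"
    using Lb by (auto simp: borel_prob_def)
  have spL[simp]: "space Lx = UNIV" using sets_eq_imp_space_eq[OF sL] by simp
  have f1L[measurable]: "f1 \<in> borel_measurable Lx" unfolding measurable_cong_sets[OF sL refl] by (rule f1)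
  have f2L[measurable]: "f2 \<in> borel_measurable Lx" unfolding measurable_cong_sets[OF sL refl] by (rule f2)
  have L1: "emeasure Lx UNIV = 1" using prob_space.emeasure_space_1[OF pL] by simp
  have fstL: "fst \<in> Lx \<rightarrow>\<^sub>M borel" unfolding measurable_cong_sets[OF sL refl] by (rule fst_borel)
  have sndL: "snd \<in> Lx \<rightarrow>\<^sub>M borel" unfolding measurable_cong_sets[OF sL refl] by (rule snd_borel)
  have coup: "density Lx f \<in> couplings Nx Gx"
    if f: "f \<in> borel_measurable Lx"
      and mY': "\<And>F. F \<in> EY \<Longrightarrow> emeasure (density Lx f) (F \<times> UNIV) = emeasure Lx (F \<times> UNIV)"
      and mZ': "\<And>F. F \<in> EZ \<Longrightarrow> emeasure (density Lx f) (UNIV \<times> F) = emeasure Lx (UNIV \<times> F)"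
    for f
  proof -
    have sR: "sets (density Lx f) = sets borel" by (simp add: sL)
    have spR[simp]: "space (density Lx f) = UNIV" by simp
    have R1: "emeasure (density Lx f) UNIV = 1"
      using mY'[OF EY(2)] L1 by simp
    have pR: "prob_space (density Lx f)" by (rule prob_spaceI) (use R1 in simp)
    have fstR: "fst \<in> density Lx f \<rightarrow>\<^sub>M borel" using fstL by simp
    have sndR: "snd \<in> density Lx f \<rightarrow>\<^sub>M borel" using sndL by simp
    have "distr (density Lx f) borel fst = distr Lx borel fst"
    proof (rule fin_eq_gen[OF EY(1,2,3)])
      fix X assume X: "X \<in> EY"
      then have Xb: "X \<in> sets borel" using EY(4) by auto
      have "fst -` X = X \<times> UNIV" by auto
      then show "emeasure (distr (density Lx f) borel fst) X = emeasure (distr Lx borel fst) X"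
        using mY'[OF X] Xb by (simp add: emeasure_distr fstR fstL vimage_fst)
    next
      show "emeasure (distr (density Lx f) borel fst) UNIV \<noteq> \<infinity>"
        using R1 by (subst emeasure_distr[OF fstR]) auto
    qed simp_all
    moreover have "distr (density Lx f) borel snd = distr Lx borel snd"
    proof (rule fin_eq_gen[OF EZ(1,2,3)])
      fix X assume X: "X \<in> EZ"
      then have Xb: "X \<in> sets borel" using EZ(4) by auto
      have "snd -` X = UNIV \<times> X" by auto
      then show "emeasure (distr (density Lx f) borel snd) X = emeasure (distr Lx borel snd) X"
        using mZ'[OF X] Xb by (simp add: emeasure_distr sndR sndL vimage_snd)
    next
      show "emeasure (distr (density Lx f) borel snd) UNIV \<noteq> \<infinity>"
        using R1 by (subst emeasure_distr[OF sndR]) auto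
    qed simp_all
    ultimately show ?thesis using pR sR LN LG by (simp add: couplings_def borel_prob_def)
  qed
  have c1: "density Lx f1 \<in> couplings Nx Gx" by (rule coup[OF f1L]) (use mY mZ in auto)
  have c2: "density Lx f2 \<in> couplings Nx Gx" by (rule coup[OF f2L]) (use mY mZ in auto)
  have D: "Lx = density Lx (\<lambda>w. ennreal t * f1 w + ennreal (1 - t) * f2 w)"
  proof (rule fin_eq_gen[OF EW(1,2,3)])
    fix X assume X: "X \<in> EW"
    then have Xb: "X \<in> sets Lx" using EW(4) sL by auto
    show "emeasure Lx X = emeasure (density Lx (\<lambda>w. ennreal t * f1 w + ennreal (1 - t) * f2 w)) X"
      using cW[OF X] dens_convex[OF f1L f2L Xb] by simp
  qed (use L1 sL in simp_all)
  have "is_convex_comb t (density Lx f1) (density Lx f2) Lx"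
    unfolding is_convex_comb_def
  proof
    fix A :: "('y \<times> 'z) set" assume "A \<in> sets borel"
    then have A: "A \<in> sets Lx" using sL by simp
    show "emeasure Lx A = ennreal t * emeasure (density Lx f1) A + ennreal (1 - t) * emeasure (density Lx f2) A"
      using dens_convex[OF f1L f2L A] D by metis
  qed
  then show ?thesis using ext c1 c2 t unfolding extreme_point_def by blast
qed




lemma piXY_borel: "piXY \<in> (borel :: ('a::topological_space \<times> 'b::topological_space \<times> 'c::topological_space) measure) \<rightarrow>\<^sub>M borel"
  unfolding piXY_def case_prod_unfold
  by (rule borel_measurable_continuous_onI) (intro continuous_intros)
lemma piXZ_borel: "piXZ \<in> (borel :: ('a::topological_space \<times> 'b::topological_space \<times> 'c::topological_space) measure) \<rightarrow>\<^sub>M borel"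
  unfolding piXZ_def case_prod_unfold
  by (rule borel_measurable_continuous_onI) (intro continuous_intros)

lemma marg_XY:
  fixes \<rho> :: "('x::second_countable_topology \<times> 'y::second_countable_topology \<times> 'z::second_countable_topology) measure"
  assumes "sets \<rho> = sets borel" "E \<in> sets borel" "F \<in> sets borel"
  shows "emeasure (distr \<rho> borel piXY) (E \<times> F) = emeasure \<rho> (E \<times> (F \<times> UNIV))"
proof -
  have m: "piXY \<in> \<rho> \<rightarrow>\<^sub>M borel" unfolding measurable_cong_sets[OF assms(1) refl] by (rule piXY_borel)
  have "piXY -` (E \<times> F) \<inter> space \<rho> = E \<times> (F \<times> UNIV)"
    using sets_eq_imp_space_eq[OF assms(1)] by (auto simp: piXY_def)
  then show ?thesis using assms by (subst emeasure_distr[OF m]) (auto intro: rect_borel)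
qed

lemma marg_XZ:
  fixes \<rho> :: "('x::second_countable_topology \<times> 'y::second_countable_topology \<times> 'z::second_countable_topology) measure"
  assumes "sets \<rho> = sets borel" "E \<in> sets borel" "F \<in> sets borel"
  shows "emeasure (distr \<rho> borel piXZ) (E \<times> F) = emeasure \<rho> (E \<times> (UNIV \<times> F))"
proof -
  have m: "piXZ \<in> \<rho> \<rightarrow>\<^sub>M borel" unfolding measurable_cong_sets[OF assms(1) refl] by (rule piXZ_borel)
  have "piXZ -` (E \<times> F) \<inter> space \<rho> = E \<times> (UNIV \<times> F)"
    using sets_eq_imp_space_eq[OF assms(1)] by (auto simp: piXZ_def)
  then show ?thesis using assms by (subst emeasure_distr[OF m]) (auto intro: rect_borel)
qed

context
  fixes \<mu> :: "'x::second_countable_topology measure" and lam :: "('x \<times> 'y::second_countable_topology \<times> 'z::second_countable_topology) measure"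
    and L :: "'x \<Rightarrow> ('y \<times> 'z) measure"
  assumes mu: "borel_prob \<mu>" and lamP: "borel_prob lam" and LD: "disintegration L \<mu> lam"
begin

lemma margY_ae:
  assumes rP: "borel_prob \<rho>" and ac: "absolutely_continuous lam \<rho>"
    and XY: "distr \<rho> borel piXY = distr lam borel piXY"
    and E: "countable (EY :: 'y set set)" "EY \<subseteq> sets borel"
  shows "AE x in \<mu>. \<forall>F\<in>EY. emeasure (density (L x) (\<lambda>w. RN_deriv lam \<rho> (x, w))) (F \<times> UNIV)
           = emeasure (L x) (F \<times> UNIV)"
  unfolding AE_ball_countable[OF E(1)]
proof
  fix F assume "F \<in> EY"
  then have Fb: "F \<in> sets borel" using E by auto
  show "AE x in \<mu>. emeasure (density (L x) (\<lambda>w. RN_deriv lam \<rho> (x, w))) (F \<times> UNIV) = emeasure (L x) (F \<times> UNIV)"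
  proof (rule comp_ae[OF mu lamP LD rP ac])
    show "F \<times> (UNIV :: 'z set) \<in> sets borel" using Fb by (intro rect_borel) auto
    fix E :: "'x set" assume Eb: "E \<in> sets borel"
    have "sets \<rho> = sets borel" "sets lam = sets borel" using rP lamP by (auto simp: borel_prob_def)
    then show "emeasure \<rho> (E \<times> (F \<times> UNIV)) = emeasure lam (E \<times> (F \<times> UNIV))"
      using marg_XY[of \<rho> E F] marg_XY[of lam E F] Eb Fb XY by metis
  qed
qed

lemma margZ_ae:
  assumes rP: "borel_prob \<rho>" and ac: "absolutely_continuous lam \<rho>"
    and XZ: "distr \<rho> borel piXZ = distr lam borel piXZ"
    and E: "countable (EZ :: 'z set set)" "EZ \<subseteq> sets borel"
  shows "AE x in \<mu>. \<forall>F\<in>EZ. emeasure (density (L x) (\<lambda>w. RN_deriv lam \<rho> (x, w))) (UNIV \<times> F)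
           = emeasure (L x) (UNIV \<times> F)"
  unfolding AE_ball_countable[OF E(1)]
proof
  fix F assume "F \<in> EZ"
  then have Fb: "F \<in> sets borel" using E by auto
  show "AE x in \<mu>. emeasure (density (L x) (\<lambda>w. RN_deriv lam \<rho> (x, w))) (UNIV \<times> F) = emeasure (L x) (UNIV \<times> F)"
  proof (rule comp_ae[OF mu lamP LD rP ac])
    show "(UNIV :: 'y set) \<times> F \<in> sets borel" using Fb by (intro rect_borel) auto
    fix E :: "'x set" assume Eb: "E \<in> sets borel"
    have "sets \<rho> = sets borel" "sets lam = sets borel" using rP lamP by (auto simp: borel_prob_def)
    then show "emeasure \<rho> (E \<times> (UNIV \<times> F)) = emeasure lam (E \<times> (UNIV \<times> F))"
      using marg_XZ[of \<rho> E F] marg_XZ[of lam E F] Eb Fb XZ by metis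
  qed
qed

lemma convex_ae:
  assumes r1P: "borel_prob \<rho>1" and ac1: "absolutely_continuous lam \<rho>1"
    and r2P: "borel_prob \<rho>2" and ac2: "absolutely_continuous lam \<rho>2"
    and cc: "\<forall>A\<in>sets borel. emeasure lam A = ennreal t * emeasure \<rho>1 A + ennreal (1 - t) * emeasure \<rho>2 A"
    and E: "countable (EW :: ('y \<times> 'z) set set)" "EW \<subseteq> sets borel"
  shows "AE x in \<mu>. \<forall>S\<in>EW. emeasure (L x) S =
      ennreal t * emeasure (density (L x) (\<lambda>w. RN_deriv lam \<rho>1 (x, w))) S
    + ennreal (1 - t) * emeasure (density (L x) (\<lambda>w. RN_deriv lam \<rho>2 (x, w))) S"
  unfolding AE_ball_countable[OF E(1)]
proof
  fix S assume "S \<in> EW"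
  then have Sb: "S \<in> sets borel" using E by auto
  note m1 = meas_R[OF mu lamP LD r1P ac1 Sb] and m2 = meas_R[OF mu lamP LD r2P ac2 Sb]
  show "AE x in \<mu>. emeasure (L x) S =
      ennreal t * emeasure (density (L x) (\<lambda>w. RN_deriv lam \<rho>1 (x, w))) S
    + ennreal (1 - t) * emeasure (density (L x) (\<lambda>w. RN_deriv lam \<rho>2 (x, w))) S"
  proof (rule ae_eq_sets[OF sf_mu[OF mu lamP LD] meas_kern_L[OF mu lamP LD Sb]])
    show "(\<lambda>x. ennreal t * emeasure (density (L x) (\<lambda>w. RN_deriv lam \<rho>1 (x, w))) S
    + ennreal (1 - t) * emeasure (density (L x) (\<lambda>w. RN_deriv lam \<rho>2 (x, w))) S) \<in> borel_measurable \<mu>"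
      using m1 m2 by measurable
    fix A assume "A \<in> sets \<mu>"
    then have A: "A \<in> sets borel" using mu by (simp add: borel_prob_def)
    have "(\<integral>\<^sup>+x. emeasure (L x) S * indicator A x \<partial>\<mu>) = emeasure lam (A \<times> S)"
      using rect[OF mu lamP LD A Sb] by simp
    also have "\<dots> = ennreal t * emeasure \<rho>1 (A \<times> S) + ennreal (1 - t) * emeasure \<rho>2 (A \<times> S)"
      using cc A Sb by (auto intro: rect_borel)
    also have "\<dots> = ennreal t * (\<integral>\<^sup>+x. emeasure (density (L x) (\<lambda>w. RN_deriv lam \<rho>1 (x, w))) S * indicator A x \<partial>\<mu>)
       + ennreal (1 - t) * (\<integral>\<^sup>+x. emeasure (density (L x) (\<lambda>w. RN_deriv lam \<rho>2 (x, w))) S * indicator A x \<partial>\<mu>)"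
      using comp_rect[OF mu lamP LD r1P ac1 A Sb] comp_rect[OF mu lamP LD r2P ac2 A Sb] by simp
    also have "\<dots> = (\<integral>\<^sup>+x. ennreal t * (emeasure (density (L x) (\<lambda>w. RN_deriv lam \<rho>1 (x, w))) S * indicator A x)
       + ennreal (1 - t) * (emeasure (density (L x) (\<lambda>w. RN_deriv lam \<rho>2 (x, w))) S * indicator A x) \<partial>\<mu>)"
    proof -
      have As: "A \<in> sets \<mu>" using A sets_mu[OF mu lamP LD] by simp
      have i1: "(\<lambda>x. emeasure (density (L x) (\<lambda>w. RN_deriv lam \<rho>1 (x, w))) S * indicator A x) \<in> borel_measurable \<mu>"
        by (rule borel_measurable_times_ennreal[OF m1 borel_measurable_indicator[OF As]])
      have i2: "(\<lambda>x. emeasure (density (L x) (\<lambda>w. RN_deriv lam \<rho>2 (x, w))) S * indicator A x) \<in> borel_measurable \<mu>"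
        by (rule borel_measurable_times_ennreal[OF m2 borel_measurable_indicator[OF As]])
      show ?thesis
        by (subst nn_integral_add) (use i1 i2 in \<open>auto simp: nn_integral_cmult\<close>)
    qed
    also have "\<dots> = (\<integral>\<^sup>+x. (ennreal t * emeasure (density (L x) (\<lambda>w. RN_deriv lam \<rho>1 (x, w))) S
    + ennreal (1 - t) * emeasure (density (L x) (\<lambda>w. RN_deriv lam \<rho>2 (x, w))) S) * indicator A x \<partial>\<mu>)"
      by (rule nn_integral_cong) (simp add: distrib_right mult.assoc)
    finally show "(\<integral>\<^sup>+x. emeasure (L x) S * indicator A x \<partial>\<mu>) = \<dots>" .
  qed
qed

end



theorem mainTheorem12:
  fixes \<mu> :: "'x::polish_space measure" and \<nu> :: "'y::polish_space measure"
    and \<gamma> :: "'z::polish_space measure"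
    and lam :: "('x \<times> 'y \<times> 'z) measure"
    and L :: "'x \<Rightarrow> ('y \<times> 'z) measure"
    and N :: "'x \<Rightarrow> 'y measure" and G :: "'x \<Rightarrow> 'z measure"
  assumes "borel_prob \<mu>" and "borel_prob \<nu>" and "borel_prob \<gamma>"
    and "lam \<in> couplings3 \<mu> \<nu> \<gamma>"
    and "disintegration L \<mu> lam"
    and "disintegration N \<mu> (distr lam borel piXY)"
    and "disintegration G \<mu> (distr lam borel piXZ)"
    and "AE x in \<mu>. L x \<in> couplings (N x) (G x)"
    and "AE x in \<mu>. extreme_point (couplings (N x) (G x)) (L x)"
  shows "extreme_point
           (couplings_XY \<mu> \<nu> \<gamma> (distr lam borel piXY) \<inter> couplings_XZ \<mu> \<nu> \<gamma> (distr lam borel piXZ)) lam"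
proof -
  note mu = assms(1) and LD = assms(5)
  have lamP: "borel_prob lam" using assms(4) by (simp add: couplings3_def)
  have sl: "sets lam = sets borel" using lamP by (simp add: borel_prob_def)
  have lamC: "lam \<in> couplings_XY \<mu> \<nu> \<gamma> (distr lam borel piXY) \<inter> couplings_XZ \<mu> \<nu> \<gamma> (distr lam borel piXZ)"
    using assms(4) by (simp add: couplings_XY_def couplings_XZ_def)
  show ?thesis unfolding extreme_point_def
  proof (intro conjI lamC ballI allI impI)
    fix \<rho>1 \<rho>2 t
    assume r1: "\<rho>1 \<in> couplings_XY \<mu> \<nu> \<gamma> (distr lam borel piXY) \<inter> couplings_XZ \<mu> \<nu> \<gamma> (distr lam borel piXZ)"
      and r2: "\<rho>2 \<in> couplings_XY \<mu> \<nu> \<gamma> (distr lam borel piXY) \<inter> couplings_XZ \<mu> \<nu> \<gamma> (distr lam borel piXZ)"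
      and tc: "0 < t \<and> t < 1 \<and> is_convex_comb t \<rho>1 \<rho>2 lam"
    have t: "0 < t" "t < 1" using tc by auto
    have cc: "\<forall>A\<in>sets borel. emeasure lam A = ennreal t * emeasure \<rho>1 A + ennreal (1 - t) * emeasure \<rho>2 A"
      using tc by (simp add: is_convex_comb_def)
    have r1P: "borel_prob \<rho>1" and r1XY: "distr \<rho>1 borel piXY = distr lam borel piXY"
      and r1XZ: "distr \<rho>1 borel piXZ = distr lam borel piXZ"
      using r1 by (auto simp: couplings_XY_def couplings_XZ_def couplings3_def)
    have r2P: "borel_prob \<rho>2" and r2XY: "distr \<rho>2 borel piXY = distr lam borel piXY"
      and r2XZ: "distr \<rho>2 borel piXZ = distr lam borel piXZ"
      using r2 by (auto simp: couplings_XY_def couplings_XZ_def couplings3_def)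
    have ac1: "absolutely_continuous lam \<rho>1"
      unfolding absolutely_continuous_def
    proof
      fix A assume "A \<in> null_sets lam"
      then have A: "A \<in> sets borel" "emeasure lam A = 0" using sl by (auto simp: null_sets_def)
      then have "ennreal t * emeasure \<rho>1 A = 0" using cc by simp
      then have "emeasure \<rho>1 A = 0" using t by simp
      then show "A \<in> null_sets \<rho>1" using A r1P by (simp add: null_sets_def borel_prob_def)
    qed
    have ac2: "absolutely_continuous lam \<rho>2"
      unfolding absolutely_continuous_def
    proof
      fix A assume "A \<in> null_sets lam"
      then have A: "A \<in> sets borel" "emeasure lam A = 0" using sl by (auto simp: null_sets_def)
      then have "ennreal (1 - t) * emeasure \<rho>2 A = 0" using cc by simp
      then have "emeasure \<rho>2 A = 0" using t by simp
      then show "A \<in> null_sets \<rho>2" using A r2P by (simp add: null_sets_def borel_prob_def)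
    qed
    obtain EY :: "'y set set" where EY: "countable EY" "Int_stable EY" "UNIV \<in> EY" "EY \<subseteq> sets borel"
        "sets borel = sigma_sets UNIV EY" using countable_gen by blast
    obtain EZ :: "'z set set" where EZ: "countable EZ" "Int_stable EZ" "UNIV \<in> EZ" "EZ \<subseteq> sets borel"
        "sets borel = sigma_sets UNIV EZ" using countable_gen by blast
    obtain EW :: "('y \<times> 'z) set set" where EW: "countable EW" "Int_stable EW" "UNIV \<in> EW" "EW \<subseteq> sets borel"
        "sets borel = sigma_sets UNIV EW" using countable_gen by blast
    note Y1 = margY_ae[OF mu lamP LD r1P ac1 r1XY EY(1,4)]
    note Y2 = margY_ae[OF mu lamP LD r2P ac2 r2XY EY(1,4)]
    note Z1 = margZ_ae[OF mu lamP LD r1P ac1 r1XZ EZ(1,4)]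
    note Z2 = margZ_ae[OF mu lamP LD r2P ac2 r2XZ EZ(1,4)]
    note W = convex_ae[OF mu lamP LD r1P ac1 r2P ac2 cc EW(1,4)]
    have fm: "(\<lambda>w. RN_deriv lam \<rho> (x, w)) \<in> borel_measurable (borel :: ('y \<times> 'z) measure)"
      if "borel_prob \<rho>" "absolutely_continuous lam \<rho>" for \<rho> x
      using measurable_compose[OF Pair_borel[OF mu lamP LD] f_meas[OF mu lamP LD that]] by simp
    have AEeq: "AE x in \<mu>. density (L x) (\<lambda>w. RN_deriv lam \<rho>1 (x, w)) = density (L x) (\<lambda>w. RN_deriv lam \<rho>2 (x, w))"
      using Y1 Y2 Z1 Z2 W assms(8) assms(9)
    proof eventually_elim
      case (elim x)
      show ?case
        by (rule pointwise[OF elim(6) elim(7) fm[OF r1P ac1] fm[OF r2P ac2] EY(2,3,5,4) EZ(2,3,5,4) EW(2,3,5,4) _ _ _ t])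
           (use elim in auto)
    qed
    show "\<rho>1 = \<rho>2"
    proof (rule measure_eqI)
      show "sets \<rho>1 = sets \<rho>2" using r1P r2P by (simp add: borel_prob_def)
      fix S assume "S \<in> sets \<rho>1"
      then have S: "S \<in> sets borel" using r1P by (simp add: borel_prob_def)
      have "emeasure \<rho>1 S = (\<integral>\<^sup>+x. \<integral>\<^sup>+w. indicator S (x, w) \<partial>density (L x) (\<lambda>w. RN_deriv lam \<rho>1 (x, w)) \<partial>\<mu>)"
        by (rule comp_int[OF mu lamP LD r1P ac1 S])
      also have "\<dots> = (\<integral>\<^sup>+x. \<integral>\<^sup>+w. indicator S (x, w) \<partial>density (L x) (\<lambda>w. RN_deriv lam \<rho>2 (x, w)) \<partial>\<mu>)"
        by (rule nn_integral_cong_AE) (use AEeq in \<open>auto elim: AE_mp\<close>)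
      also have "\<dots> = emeasure \<rho>2 S"
        by (rule comp_int[OF mu lamP LD r2P ac2 S, symmetric])
      finally show "emeasure \<rho>1 S = emeasure \<rho>2 S" .
    qed
  qed
qed


end
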